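(* For every positive integer $n\neq 4$, $\mathrm{ex}(n,M_2,P_4)=\mathcal{N}(M_2,D(3,n))$, and $\mathrm{ex}(4,M_2,P_4)=1$.
   Context: $M_2$ is the matching with two edges, $P_4$ the path on $4$ vertices (three edges). $D(k,n)$ is the graph on $n$ vertices consisting of $\lfloor n/k\rfloor$ vertex-disjoint copies of $K_k$ and a clique on the remaining $n-k\lfloor n/k\rfloor$ vertices. For graphs $H,G$, $\mathcal{N}(H,G)$ is the number of subgraphs of $G$ isomorphic to $H$, and $\mathrm{ex}(n,H,F)$ is the maximum of $\mathcal{N}(H,G)$ over $F$-free graphs $G$ on $n$ vertices. *)

theory Defs
  imports Main
begin

type_synonym 'a graph = "'a set \<times> 'a set set"

definition is_graph :: "'a graph \<Rightarrow> bool" where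
  "is_graph G \<longleftrightarrow> finite (fst G) \<and> (\<forall>e\<in>snd G. e \<subseteq> fst G \<and> card e = 2)"

definition subgraph :: "'a graph \<Rightarrow> 'a graph \<Rightarrow> bool" where
  "subgraph S G \<longleftrightarrow> is_graph S \<and> fst S \<subseteq> fst G \<and> snd S \<subseteq> snd G"

definition graph_iso :: "'a graph \<Rightarrow> 'b graph \<Rightarrow> bool" where
  "graph_iso G H \<longleftrightarrow> (\<exists>f. bij_betw f (fst G) (fst H) \<and> snd H = (\<lambda>e. f ` e) ` snd G)"

definition count_sub :: "'b graph \<Rightarrow> 'a graph \<Rightarrow> nat" where
  "count_sub H G = card {S. subgraph S G \<and> graph_iso S H}"

definition H_free :: "'b graph \<Rightarrow> 'a graph \<Rightarrow> bool" where
  "H_free F G \<longleftrightarrow> \<not> (\<exists>S. subgraph S G \<and> graph_iso S F)"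

text \<open>ex(n,H,F): maximum of N(H,G) over F-free graphs G on n vertices
  (vertex set {0..<n}; counts are isomorphism invariant).\<close>
definition gen_ex :: "nat \<Rightarrow> 'b graph \<Rightarrow> 'c graph \<Rightarrow> nat" where
  "gen_ex n H F = Max {count_sub H G | G :: nat graph.
      is_graph G \<and> fst G = {0..<n} \<and> H_free F G}"

definition M2 :: "nat graph" where
  "M2 = ({0,1,2,3}, {{0,1},{2,3}})"

definition P4 :: "nat graph" where
  "P4 = ({0,1,2,3}, {{0,1},{1,2},{2,3}})"

text \<open>D(k,n): floor(n/k) disjoint copies of K_k plus a clique on the remaining vertices.\<close>
definition D :: "nat \<Rightarrow> nat \<Rightarrow> nat graph" where
  "D k n = ({0..<n}, {{u,v} | u v. u < n \<and> v < n \<and> u \<noteq> v \<and> u div k = v div k})"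

end

theory Submission
  imports Defs
begin

definition Es :: "nat \<Rightarrow> int" where "Es n = 3*int(n div 3) + (if n mod 3 = 2 then 1 else 0)"
definition G2 :: "nat \<Rightarrow> int" where
 "G2 n = 9*int(n div 3)*(int(n div 3) - 1) + (if n mod 3 = 2 then 6*int(n div 3) else 0)"

lemma dm: "(3*a+1) div 3 = (a::nat)" "(3*a+1) mod 3 = 1" "(3*a+2) div 3 = (a::nat)" "(3*a+2) mod 3 = 2"
  by presburger+

lemma Es0: "Es (3*a) = 3*int a" by (simp only: Es_def dm; simp)
lemma Es1: "Es (3*a+1) = 3*int a" by (simp only: Es_def dm; simp)
lemma Es2: "Es (3*a+2) = 3*int a+1" by (simp only: Es_def dm; simp)
lemma G20: "G2 (3*a) = 9*int a*(int a - 1)" by (simp only: G2_def dm; simp)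
lemma G21: "G2 (3*a+1) = 9*int a*(int a - 1)" by (simp only: G2_def dm; simp)
lemma G22: "G2 (3*a+2) = 9*int a*(int a - 1) + 6*int a" by (simp only: G2_def dm; simp)

lemma rep: fixes c :: nat obtains a where "c = 3*a" | a where "c = 3*a+1" | a where "c = 3*a+2"
proof -
  have "c mod 3 = 0 \<or> c mod 3 = 1 \<or> c mod 3 = 2" by presburger
  moreover have "c = 3*(c div 3) + c mod 3" by simp
  ultimately show ?thesis using that by (metis add_0_right)
qed

lemma N1: "Es c + Es m \<le> Es (c+m)"
proof -
  have e1: "3*a + (3*b+1) = 3*(a+b)+1" "3*a+1 + 3*b = 3*(a+b)+1" "3*a+1+(3*b+1) = 3*(a+b)+2"
     "3*a + (3*b+2) = 3*(a+b)+2" "3*a+2 + 3*b = 3*(a+b)+2" "3*a+1+(3*b+2) = 3*(a+b+1)"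
     "3*a+2+(3*b+1) = 3*(a+b+1)" "3*a+2+(3*b+2) = 3*(a+b+1)+1" "3*a+3*b = 3*(a+b)" for a b :: nat by simp_all
  show ?thesis
    by (cases c rule: rep; cases m rule: rep) (simp_all only: e1 Es0 Es1 Es2; simp)+
qed

lemma G2_nonneg: "G2 c \<ge> 0"
  unfolding G2_def by (cases "c div 3") auto

lemma Es_ge: "int c - 1 \<le> Es c"
  by (cases c rule: rep) (simp_all only: Es0 Es1 Es2; simp)+

lemma N2: "\<not>(c = 2 \<and> m = 2) \<Longrightarrow> G2 c + G2 m + 2*Es c*Es m \<le> G2 (c+m)"
proof -
  assume ne: "\<not>(c = 2 \<and> m = 2)"
  have e1: "3*a + (3*b+1) = 3*(a+b)+1" "3*a+1 + 3*b = 3*(a+b)+1" "3*a+1+(3*b+1) = 3*(a+b)+2"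
     "3*a + (3*b+2) = 3*(a+b)+2" "3*a+2 + 3*b = 3*(a+b)+2" "3*a+1+(3*b+2) = 3*(a+b+1)"
     "3*a+2+(3*b+1) = 3*(a+b+1)" "3*a+2+(3*b+2) = 3*(a+b+1)+1" "3*a+3*b = 3*(a+b)" for a b :: nat by simp_all
  show ?thesis
  proof (cases c rule: rep; cases m rule: rep)
    fix a b assume h: "c = 3*a+2" "m = 3*b+2"
    have "int a + int b \<ge> 1" using ne h by auto
    then show ?thesis unfolding h e1 Es2 G22 G21 by (simp add: algebra_simps)
  qed (simp_all only: e1 Es0 Es1 Es2 G20 G21 G22; simp add: algebra_simps)+
qed

definition nopath :: "'a set set \<Rightarrow> bool" where
  "nopath E \<longleftrightarrow> \<not>(\<exists>a b c d. distinct [a,b,c,d] \<and> {a,b}\<in>E \<and> {b,c}\<in>E \<and> {c,d}\<in>E)"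

definition pairs :: "'a set set \<Rightarrow> 'a set set set" where
  "pairs E = {P. \<exists>x\<in>E. \<exists>y\<in>E. x \<inter> y = {} \<and> P = {x,y}}"

lemma nopathD: "nopath E \<Longrightarrow> {a,b}\<in>E \<Longrightarrow> {b,c}\<in>E \<Longrightarrow> {c,d}\<in>E \<Longrightarrow> distinct [a,b,c,d] \<Longrightarrow> False"
  unfolding nopath_def by blast

lemma card2_mem: "card x = 2 \<Longrightarrow> u \<in> x \<Longrightarrow> \<exists>p. x = {u,p} \<and> p \<noteq> u"
  by (metis card_2_iff insert_commute insertE singletonD)

lemma noloop: "\<forall>e\<in>E. card e = 2 \<Longrightarrow> {x,y} \<in> E \<Longrightarrow> x \<noteq> y"
  by fastforce

lemma pairs_finite: "finite E \<Longrightarrow> finite (pairs E)"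
  by (rule finite_subset[of _ "Pow E"]) (auto simp: pairs_def)

lemma pairs_sub: "P \<in> pairs E \<Longrightarrow> P \<subseteq> E \<and> P \<noteq> {}"
  unfolding pairs_def by auto

lemma pairs_split:
  assumes fA: "finite A" and fB: "finite B" and ne: "\<forall>a\<in>A \<union> B. a \<noteq> {}"
    and dj: "\<forall>a\<in>A. \<forall>b\<in>B. a \<inter> b = {}"
  shows "card (pairs (A \<union> B)) = card (pairs A) + card (pairs B) + card A * card B"
proof -
  have AB: "A \<inter> B = {}" using ne dj by blast
  define X where "X = (\<lambda>(a,b). {a,b}) ` (A \<times> B)"
  have eq: "pairs (A \<union> B) = pairs A \<union> pairs B \<union> X"
  proof (intro equalityI subsetI)
    fix P assume "P \<in> pairs (A \<union> B)"
    then obtain x y where xy: "x \<in> A \<union> B" "y \<in> A \<union> B" "x \<inter> y = {}" "P = {x,y}"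
      unfolding pairs_def by blast
    show "P \<in> pairs A \<union> pairs B \<union> X"
    proof (cases "x \<in> A")
      case True
      show ?thesis
      proof (cases "y \<in> A")
        case True
        then have "P \<in> pairs A" unfolding pairs_def using xy \<open>x \<in> A\<close> by blast
        then show ?thesis by blast
      next
        case False
        then have "(x,y) \<in> A \<times> B" using xy \<open>x \<in> A\<close> by blast
        then have "P \<in> X" unfolding X_def using xy(4) by force
        then show ?thesis by blast
      qed
    next
      case False
      then have xB: "x \<in> B" using xy by blast
      show ?thesis
      proof (cases "y \<in> B")
        case True
        then have "P \<in> pairs B" unfolding pairs_def using xy xB by blast
        then show ?thesis by blast
      next
        case False
        then have "(y,x) \<in> A \<times> B" using xy xB by blast
        moreover have "P = {y,x}" using xy(4) by (simp add: insert_commute)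
        ultimately have "P \<in> X" unfolding X_def by force
        then show ?thesis by blast
      qed
    qed
  next
    fix P assume "P \<in> pairs A \<union> pairs B \<union> X"
    then show "P \<in> pairs (A \<union> B)"
    proof (elim UnE)
      assume "P \<in> pairs A" then show ?thesis unfolding pairs_def by blast
    next
      assume "P \<in> pairs B" then show ?thesis unfolding pairs_def by blast
    next
      assume "P \<in> X"
      then obtain a b where ab: "a \<in> A" "b \<in> B" "P = {a,b}" unfolding X_def by auto
      then have "a \<in> A \<union> B" "b \<in> A \<union> B" "a \<inter> b = {}" using dj by auto
      then show ?thesis unfolding pairs_def using ab(3) by blast
    qed
  qed
  have d1: "pairs A \<inter> pairs B = {}"
    using pairs_sub[of _ A] pairs_sub[of _ B] AB by blast
  have d2: "(pairs A \<union> pairs B) \<inter> X = {}"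
  proof (rule ccontr)
    assume "(pairs A \<union> pairs B) \<inter> X \<noteq> {}"
    then obtain P where P1: "P \<in> pairs A \<union> pairs B" "P \<in> X" by blast
    then obtain a b where P: "a \<in> A" "b \<in> B" "P = {a,b}"
      unfolding X_def by auto
    from P1(1) have "P \<subseteq> A \<or> P \<subseteq> B" using pairs_sub by blast
    then show False using P AB by blast
  qed
  have inj: "inj_on (\<lambda>(a,b). {a,b}) (A \<times> B)"
  proof (rule inj_onI)
    fix p q assume p: "p \<in> A \<times> B" and q: "q \<in> A \<times> B"
      and e: "(\<lambda>(a,b). {a,b}) p = (\<lambda>(a,b). {a,b}) q"
    obtain a b where ab: "p = (a,b)" "a \<in> A" "b \<in> B" using p by blast
    obtain a' b' where ab': "q = (a',b')" "a' \<in> A" "b' \<in> B" using q by blast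
    have "{a,b} = {a',b'}" using e ab ab' by simp
    then have "a = a' \<and> b = b' \<or> a = b' \<and> b = a'" by (simp add: doubleton_eq_iff)
    then show "p = q" using ab ab' AB by blast
  qed
  have cX: "card X = card A * card B"
    unfolding X_def using card_image[OF inj] by (simp add: card_cartesian_product)
  have fX: "finite X" unfolding X_def using fA fB by simp
  have f1: "finite (pairs A \<union> pairs B)" using pairs_finite[OF fA] pairs_finite[OF fB] by simp
  have "card (pairs (A \<union> B)) = card (pairs A \<union> pairs B) + card X"
    unfolding eq by (rule card_Un_disjoint[OF f1 fX d2])
  also have "card (pairs A \<union> pairs B) = card (pairs A) + card (pairs B)"
    by (rule card_Un_disjoint[OF pairs_finite[OF fA] pairs_finite[OF fB] d1])
  finally show ?thesis using cX by simp
qed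

lemma star_bound:
  assumes fin: "finite V" and E: "\<forall>e\<in>E. e \<subseteq> V \<and> card e = 2"
    and ab: "{a,b} \<in> E" "a \<noteq> b" and Nb: "{y. {b,y}\<in>E} \<subseteq> {a}"
    and C: "C = {a,b} \<union> {y. {a,y}\<in>E} \<union> {y. {b,y}\<in>E}"
    and touch: "\<forall>e\<in>E. e \<subseteq> C \<longrightarrow> a\<in>e \<or> b\<in>e"
  shows "card {e\<in>E. e \<subseteq> C} + 1 \<le> card C"
proof -
  define Na where "Na = {y. {a,y}\<in>E}"
  have fNa: "finite Na" unfolding Na_def
    by (rule finite_subset[OF _ fin]) (use E in auto)
  have bNa: "b \<in> Na" using ab unfolding Na_def by simp
  have aNa: "a \<notin> Na" unfolding Na_def using E by fastforce
  have CC: "C = insert a Na" using C Nb bNa unfolding Na_def by auto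
  have sub: "{e\<in>E. e \<subseteq> C} \<subseteq> (\<lambda>y. {a,y}) ` Na"
  proof
    fix e assume e: "e \<in> {e\<in>E. e \<subseteq> C}"
    then have c2: "card e = 2" "e \<in> E" using E by auto
    from touch e have "a \<in> e \<or> b \<in> e" by auto
    then show "e \<in> (\<lambda>y. {a,y}) ` Na"
    proof
      assume ae: "a \<in> e"
      obtain p where "e = {a,p}" using card2_mem[OF c2(1) ae] by blast
      then show ?thesis using c2 unfolding Na_def by auto
    next
      assume be: "b \<in> e"
      obtain p where p: "e = {b,p}" using card2_mem[OF c2(1) be] by blast
      then have "p = a" using Nb c2 by auto
      then show ?thesis using p bNa by (auto simp: insert_commute)
    qed
  qed
  have "card {e\<in>E. e \<subseteq> C} \<le> card ((\<lambda>y. {a,y}) ` Na)"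
    by (rule card_mono[OF _ sub]) (use fNa in simp)
  also have "\<dots> \<le> card Na" by (rule card_image_le[OF fNa])
  finally show ?thesis using CC aNa fNa by simp
qed

lemma decomp:
  assumes fin: "finite V" and E: "\<forall>e\<in>E. e \<subseteq> V \<and> card e = 2" and np: "nopath E"
    and uv: "{u,v} \<in> E" "u \<noteq> v"
    and Cdef: "C = {u,v} \<union> {y. {u,y}\<in>E} \<union> {y. {v,y}\<in>E}"
  shows "C \<subseteq> V" "card C \<ge> 2" "\<forall>x y. {x,y}\<in>E \<longrightarrow> x\<in>C \<longrightarrow> y\<in>C"
    "pairs {e\<in>E. e \<subseteq> C} = {}" "int (card {e\<in>E. e \<subseteq> C}) \<le> Es (card C)"
    "card {e\<in>E. e \<subseteq> C} \<ge> 1"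
proof -
  have EC: "\<And>x y. {x,y} \<in> E \<Longrightarrow> {y,x} \<in> E" by (simp add: insert_commute)
  have c2all: "\<forall>e\<in>E. card e = 2" using E by blast
  note nl = noloop[OF c2all]
  show CV: "C \<subseteq> V" unfolding Cdef using E uv by auto
  have fC: "finite C" using CV fin finite_subset by blast
  show "card C \<ge> 2"
  proof -
    have "{u,v} \<subseteq> C" unfolding Cdef by auto
    then have "card {u,v} \<le> card C" using fC card_mono by blast
    then show ?thesis using uv by simp
  qed
  show key: "\<forall>x y. {x,y}\<in>E \<longrightarrow> x\<in>C \<longrightarrow> y\<in>C"
  proof (intro allI impI)
    fix x y assume xy: "{x,y} \<in> E" and x: "x \<in> C"
    show "y \<in> C"
    proof (rule ccontr)
      assume y: "y \<notin> C"
      then have yu: "y \<noteq> u" "y \<noteq> v" unfolding Cdef by auto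
      have "x \<noteq> u" using y xy unfolding Cdef by auto
      moreover have "x \<noteq> v" using y xy unfolding Cdef by auto
      ultimately have "{u,x} \<in> E \<or> {v,x} \<in> E" using x unfolding Cdef by auto
      moreover have "x \<noteq> y" using nl xy by blast
      ultimately show False using nopathD[OF np EC[OF xy], of u v] nopathD[OF np EC[OF xy], of v u]
        yu uv EC `x \<noteq> u` `x \<noteq> v` by (auto simp: insert_commute)
    qed
  qed
  have touch: "\<forall>e\<in>E. e \<subseteq> C \<longrightarrow> u\<in>e \<or> v\<in>e"
  proof (intro ballI impI)
    fix e assume e: "e \<in> E" "e \<subseteq> C"
    obtain x y where xy: "e = {x,y}" "x \<noteq> y" using E e card_2_iff by metis
    show "u\<in>e \<or> v\<in>e"
    proof (rule ccontr)
      assume "\<not> (u\<in>e \<or> v\<in>e)"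
      then have ne: "x \<noteq> u" "x \<noteq> v" "y \<noteq> u" "y \<noteq> v" using xy by auto
      have "{u,x} \<in> E \<or> {v,x} \<in> E" using e xy ne unfolding Cdef by auto
      then show False using nopathD[OF np, of y x u v] nopathD[OF np, of y x v u] e xy ne uv
        by (auto simp: insert_commute)
    qed
  qed
  show "pairs {e\<in>E. e \<subseteq> C} = {}"
  proof (rule ccontr)
    assume "pairs {e\<in>E. e \<subseteq> C} \<noteq> {}"
    then obtain x y where xy: "x \<in> E" "x \<subseteq> C" "y \<in> E" "y \<subseteq> C" "x \<inter> y = {}"
      unfolding pairs_def by blast
    have g: False if gh: "x \<in> E" "y \<in> E" "x \<inter> y = {}" "u \<in> x" "v \<in> y" for x y
    proof -
      have cx: "card x = 2" "card y = 2" using gh E by blast+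
      obtain p where p: "x = {u,p}" "p \<noteq> u" using card2_mem[OF cx(1) gh(4)] by blast
      obtain q where q: "y = {v,q}" "q \<noteq> v" using card2_mem[OF cx(2) gh(5)] by blast
      show False using nopathD[OF np, of p u v q] gh p q uv by (auto simp: insert_commute)
    qed
    have hx: "u \<in> x \<or> v \<in> x" using touch xy(1,2) by blast
    have hy: "u \<in> y \<or> v \<in> y" using touch xy(3,4) by blast
    have nb: "\<not>(u\<in>x \<and> u\<in>y)" "\<not>(v\<in>x \<and> v\<in>y)" using xy(5) by blast+
    have yx: "y \<inter> x = {}" using xy(5) by blast
    show False using hx hy nb g[OF xy(1) xy(3) xy(5)] g[OF xy(3) xy(1) yx] by blast
  qed
  show "card {e\<in>E. e \<subseteq> C} \<ge> 1"
  proof -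
    have "finite E" using fin E by (intro finite_subset[of E "Pow V"]) auto
    moreover have "{u,v} \<in> {e\<in>E. e \<subseteq> C}" using uv unfolding Cdef by auto
    ultimately show ?thesis by (metis (no_types, lifting) One_nat_def Suc_leI card_gt_0_iff empty_iff finite_subset mem_Collect_eq subsetI)
  qed
  show "int (card {e\<in>E. e \<subseteq> C}) \<le> Es (card C)"
  proof (cases "(\<exists>x. {u,x}\<in>E \<and> x \<noteq> v) \<and> (\<exists>y. {v,y}\<in>E \<and> y \<noteq> u)")
    case True
    have "\<exists>x. {u,x}\<in>E \<and> x \<noteq> v" using True by (rule conjunct1)
    then obtain x where "{u,x}\<in>E \<and> x \<noteq> v" ..
    then have x: "{u,x}\<in>E" "x \<noteq> v" by simp_all
    have "\<exists>y. {v,y}\<in>E \<and> y \<noteq> u" using True by (rule conjunct2)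
    then obtain y where "{v,y}\<in>E \<and> y \<noteq> u" ..
    then have y: "{v,y}\<in>E" "y \<noteq> u" by simp_all
    have xu: "x \<noteq> u" "y \<noteq> v" using nl x y by auto
    have same: "z = w" if "{u,z}\<in>E" "z \<noteq> v" "{v,w}\<in>E" "w \<noteq> u" for z w
    proof (rule ccontr)
      assume "z \<noteq> w"
      moreover have "z \<noteq> u" "w \<noteq> v" using nl that by auto
      ultimately show False using nopathD[OF np, of z u v w] that uv by (auto simp: insert_commute)
    qed
    have xy: "x = y" by (rule same[OF x y])
    have Nu: "{z. {u,z}\<in>E} \<subseteq> {v,x}"
    proof
      fix z assume z: "z \<in> {z. {u,z}\<in>E}"
      show "z \<in> {v,x}"
      proof (cases "z = v")
        case False
        have "z = y" using same[OF _ False y] z by simp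
        then show ?thesis using xy by simp
      qed simp
    qed
    have Nv: "{z. {v,z}\<in>E} \<subseteq> {u,x}"
    proof
      fix z assume z: "z \<in> {z. {v,z}\<in>E}"
      show "z \<in> {u,x}"
      proof (cases "z = u")
        case False
        have "x = z" using same[OF x _ False] z by simp
        then show ?thesis by simp
      qed simp
    qed
    have CC: "C = {u,v,x}"
      unfolding Cdef using Nu Nv x by auto
    have c3: "card C = 3" using CC xu x uv by auto
    have "{e\<in>E. e \<subseteq> C} \<subseteq> {{u,v},{u,x},{v,x}}"
    proof
      fix e assume e: "e \<in> {e\<in>E. e \<subseteq> C}"
      obtain a b where ab: "e = {a,b}" "a \<noteq> b" using E e card_2_iff by (metis (no_types, lifting) mem_Collect_eq)
      show "e \<in> {{u,v},{u,x},{v,x}}" using e ab CC by (auto simp: insert_commute)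
    qed
    then have "card {e\<in>E. e \<subseteq> C} \<le> card {{u,v},{u,x},{v,x}}" by (intro card_mono) auto
    also have "\<dots> \<le> 3" by (simp add: card_insert_if)
    finally show ?thesis using c3 by (simp add: Es_def)
  next
    case False
    then have "{y. {u,y}\<in>E} \<subseteq> {v} \<or> {y. {v,y}\<in>E} \<subseteq> {u}" by auto
    then have "card {e\<in>E. e \<subseteq> C} + 1 \<le> card C"
    proof
      assume "{y. {v,y}\<in>E} \<subseteq> {u}"
      then show ?thesis using star_bound[OF fin E uv(1) uv(2) _ Cdef] touch by blast
    next
      assume h: "{y. {u,y}\<in>E} \<subseteq> {v}"
      have C2: "C = {v,u} \<union> {y. {v,y}\<in>E} \<union> {y. {u,y}\<in>E}" unfolding Cdef by auto
      show ?thesis using star_bound[OF fin E EC[OF uv(1)] uv(2)[symmetric] h C2] touch by blast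
    qed
    then show ?thesis using Es_ge[of "card C"] by linarith
  qed
qed

lemma img_eq_sub:
  assumes "inj_on f A" "X \<subseteq> A" "Y \<subseteq> A" "f ` X = f ` Y" shows "X = Y"
  using assms by (metis inj_on_image_eq_iff)

lemma inj_eq: "inj_on f A \<Longrightarrow> a \<in> A \<Longrightarrow> b \<in> A \<Longrightarrow> f a = f b \<Longrightarrow> a = b"
  by (simp add: inj_on_def)

lemma iso_M2:
  assumes g: "is_graph S" and iso: "graph_iso S M2"
  shows "\<exists>x y. snd S = {x,y} \<and> x \<inter> y = {} \<and> fst S = x \<union> y"
proof -
  obtain f where bij: "bij_betw f (fst S) {0,1,2,3::nat}"
    and im: "{{0,1},{2,3::nat}} = (\<lambda>e. f ` e) ` snd S"
    using iso unfolding graph_iso_def M2_def by auto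
  have inj: "inj_on f (fst S)" and surj: "f ` fst S = {0,1,2,3}"
    using bij by (auto simp: bij_betw_def)
  have sub: "\<And>e. e \<in> snd S \<Longrightarrow> e \<subseteq> fst S" using g unfolding is_graph_def by blast
  have "{0,1::nat} \<in> (\<lambda>e. f ` e) ` snd S" unfolding im[symmetric] by simp
  then obtain x where x: "x \<in> snd S" "f ` x = {0,1}" by (metis imageE)
  have "{2,3::nat} \<in> (\<lambda>e. f ` e) ` snd S" unfolding im[symmetric] by simp
  then obtain y where y: "y \<in> snd S" "f ` y = {2,3}" by (metis imageE)
  have "snd S \<subseteq> {x,y}"
  proof
    fix e assume e: "e \<in> snd S"
    have "f ` e \<in> (\<lambda>e. f ` e) ` snd S" using e by (rule imageI)
    then have "f ` e \<in> {{0,1},{2,3::nat}}" unfolding im[symmetric] .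
    then have "f ` e = {0,1} \<or> f ` e = {2,3}" by simp
    then show "e \<in> {x,y}"
    proof
      assume "f ` e = {0,1}"
      then have "f ` e = f ` x" using x(2) by simp
      then have "e = x" using img_eq_sub[OF inj sub[OF e] sub[OF x(1)]] by simp
      then show ?thesis by simp
    next
      assume "f ` e = {2,3}"
      then have "f ` e = f ` y" using y(2) by simp
      then have "e = y" using img_eq_sub[OF inj sub[OF e] sub[OF y(1)]] by simp
      then show ?thesis by simp
    qed
  qed
  then have s: "snd S = {x,y}" using x(1) y(1) by blast
  have d: "x \<inter> y = {}"
  proof (rule ccontr)
    assume "x \<inter> y \<noteq> {}"
    then obtain z where z: "z \<in> x" "z \<in> y" by blast
    have "f z \<in> f ` x" using z(1) by (rule imageI)
    then have a: "f z \<in> {0,1}" using x(2) by simp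
    have "f z \<in> f ` y" using z(2) by (rule imageI)
    then have b: "f z \<in> {2,3}" using y(2) by simp
    show False using a b by auto
  qed
  have "fst S \<subseteq> x \<union> y"
  proof
    fix z assume z: "z \<in> fst S"
    have "f z \<in> f ` fst S" using z by (rule imageI)
    then have "f z \<in> {0,1,2,3}" using surj by simp
    then have "f z \<in> {0,1} \<or> f z \<in> {2,3}" by auto
    then have "f z \<in> f ` x \<or> f z \<in> f ` y" using x(2) y(2) by simp
    then show "z \<in> x \<union> y"
    proof
      assume "f z \<in> f ` x"
      then obtain z' where z': "z' \<in> x" "f z' = f z" by (metis imageE)
      have "z' \<in> fst S" using sub[OF x(1)] z'(1) by blast
      then have "z' = z" using inj_eq[OF inj _ z z'(2)] by simp
      then show ?thesis using z'(1) by simp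
    next
      assume "f z \<in> f ` y"
      then obtain z' where z': "z' \<in> y" "f z' = f z" by (metis imageE)
      have "z' \<in> fst S" using sub[OF y(1)] z'(1) by blast
      then have "z' = z" using inj_eq[OF inj _ z z'(2)] by simp
      then show ?thesis using z'(1) by simp
    qed
  qed
  moreover have "x \<union> y \<subseteq> fst S" using sub[OF x(1)] sub[OF y(1)] by blast
  ultimately have "fst S = x \<union> y" by (rule equalityI)
  then show ?thesis using s d by blast
qed

lemma M2_iso_of:
  assumes x: "card x = 2" and y: "card y = 2" and d: "x \<inter> y = {}"
  shows "graph_iso (x \<union> y, {x,y}) M2"
proof -
  obtain a b where ab: "x = {a,b}" "a \<noteq> b" using x card_2_iff by metis
  obtain c e where ce: "y = {c,e}" "c \<noteq> e" using y card_2_iff by metis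
  have ne: "a \<noteq> c" "a \<noteq> e" "b \<noteq> c" "b \<noteq> e" using d ab ce by auto
  define f where "f z = (if z = a then 0 else if z = b then 1 else if z = c then 2 else (3::nat))" for z
  have fv: "f a = 0" "f b = 1" "f c = 2" "f e = 3" unfolding f_def using ab ce ne by auto
  have xy: "x \<union> y = {a,b,c,e}" using ab ce by auto
  have bij: "bij_betw f (x \<union> y) {0,1,2,3}"
    unfolding xy bij_betw_def inj_on_def using fv by auto
  have im: "{{0,1},{2,3::nat}} = (\<lambda>e. f ` e) ` {x,y}"
    using fv ab ce by simp
  show ?thesis unfolding graph_iso_def M2_def fst_conv snd_conv using bij im by blast
qed

lemma count_M2:
  assumes g: "is_graph G"
  shows "count_sub M2 G = card (pairs (snd G))"
proof -
  let ?A = "{S. subgraph S G \<and> graph_iso S M2}"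
  have c2: "\<And>e. e \<in> snd G \<Longrightarrow> card e = 2 \<and> e \<subseteq> fst G" using g unfolding is_graph_def by blast
  have memA: "is_graph S \<and> graph_iso S M2 \<and> snd S \<subseteq> snd G" if "S \<in> ?A" for S
    using that unfolding subgraph_def by simp
  have "bij_betw snd ?A (pairs (snd G))"
  proof (rule bij_betw_imageI)
    show "inj_on snd ?A"
    proof (rule inj_onI)
      fix S T assume S: "S \<in> ?A" and T: "T \<in> ?A" and e: "snd S = snd T"
      have "\<exists>x y. snd S = {x,y} \<and> x \<inter> y = {} \<and> fst S = x \<union> y"
        using iso_M2 memA[OF S] by blast
      then have fS: "fst S = \<Union>(snd S)" by auto
      have "\<exists>x y. snd T = {x,y} \<and> x \<inter> y = {} \<and> fst T = x \<union> y"
        using iso_M2 memA[OF T] by blast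
      then have fT: "fst T = \<Union>(snd T)" by auto
      have "fst S = fst T" using fS fT e by simp
      then show "S = T" using e by (simp add: prod_eq_iff)
    qed
  next
    show "snd ` ?A = pairs (snd G)"
    proof (intro equalityI subsetI)
      fix P assume "P \<in> snd ` ?A"
      then obtain S where S: "S \<in> ?A" "P = snd S" by blast
      have "\<exists>x y. snd S = {x,y} \<and> x \<inter> y = {} \<and> fst S = x \<union> y"
        using iso_M2 memA[OF S(1)] by blast
      then obtain x y where xy0: "snd S = {x,y} \<and> x \<inter> y = {} \<and> fst S = x \<union> y"
        by (elim exE) (erule that)
      then have xy: "snd S = {x,y}" "x \<inter> y = {}" by simp_all
      have "snd S \<subseteq> snd G" using memA[OF S(1)] by blast
      then have xyG: "x \<in> snd G" "y \<in> snd G" using xy by auto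
      have "P = {x,y}" using S(2) xy(1) by simp
      then show "P \<in> pairs (snd G)" unfolding pairs_def using xyG xy(2) by blast
    next
      fix P assume "P \<in> pairs (snd G)"
      then obtain x y where xy: "x \<in> snd G" "y \<in> snd G" "x \<inter> y = {}" "P = {x,y}"
        unfolding pairs_def by blast
      have cx: "card x = 2" "card y = 2" "x \<subseteq> fst G" "y \<subseteq> fst G" using c2 xy(1,2) by auto
      have fin: "finite (x \<union> y)" using cx(1,2) by (metis card.infinite finite_Un zero_neq_numeral)
      have "is_graph (x \<union> y, {x,y})" unfolding is_graph_def using cx fin by auto
      then have "subgraph (x \<union> y, {x,y}) G"
        unfolding subgraph_def using cx xy by auto
      moreover have "graph_iso (x \<union> y, {x,y}) M2" by (rule M2_iso_of[OF cx(1,2) xy(3)])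
      ultimately have "(x \<union> y, {x,y}) \<in> ?A" by simp
      then have "snd (x \<union> y, {x,y}) \<in> snd ` ?A" by (rule imageI)
      then show "P \<in> snd ` ?A" using xy(4) by simp
    qed
  qed
  then show ?thesis unfolding count_sub_def by (rule bij_betw_same_card)
qed

lemma nopath_mono: "nopath E \<Longrightarrow> F \<subseteq> E \<Longrightarrow> nopath F"
  unfolding nopath_def by blast

lemma main_bound:
  assumes "finite V" "\<forall>e\<in>E. e \<subseteq> V \<and> card e = 2" "nopath E"
  shows "2*int l*int (card E) + 2*int (card (pairs E))
    \<le> 2*int l*Es (card V) + G2 (card V) + (if card V = 4 \<and> l = 0 then 2 else 0)"
  using assms
proof (induction "card V" arbitrary: V E l rule: less_induct)
  case less
  have finE: "finite E" using less.prems(1,2) by (intro finite_subset[of E "Pow V"]) auto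
  show ?case
  proof (cases "E = {}")
    case True
    have "Es (card V) \<ge> 0" by (simp add: Es_def)
    then have "2*int l*Es (card V) \<ge> 0" by simp
    moreover have "pairs E = {}" using True unfolding pairs_def by blast
    ultimately show ?thesis using True G2_nonneg[of "card V"] by simp
  next
    case False
    then obtain e0 where e0: "e0 \<in> E" by blast
    then have "card e0 = 2" using less.prems(2) by blast
    then obtain u v where uv0: "e0 = {u,v}" "u \<noteq> v" unfolding card_2_iff by blast
    have uvE: "{u,v} \<in> E" using e0 uv0 by simp
    define C where "C = {u,v} \<union> {y. {u,y}\<in>E} \<union> {y. {v,y}\<in>E}"
    note D = decomp[OF less.prems(1) less.prems(2) less.prems(3) uvE uv0(2) C_def]
    define R where "R = V - C"
    define EC where "EC = {e\<in>E. e \<subseteq> C}"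
    define ER where "ER = {e\<in>E. e \<subseteq> R}"
    have Esplit: "E = EC \<union> ER"
    proof (intro equalityI subsetI)
      fix e assume e: "e \<in> E"
      then have "card e = 2" "e \<subseteq> V" using less.prems(2) by blast+
      then obtain x y where xy: "e = {x,y}" unfolding card_2_iff by blast
      show "e \<in> EC \<union> ER"
      proof (cases "x \<in> C")
        case True
        then have "y \<in> C" using D(3) e xy by blast
        then show ?thesis using True xy e unfolding EC_def by blast
      next
        case False
        have "{y,x} \<in> E" using e xy by (simp add: insert_commute)
        then have "y \<notin> C" using D(3) False by blast
        then show ?thesis using False xy e \<open>e \<subseteq> V\<close> unfolding ER_def R_def by blast
      qed
    qed (auto simp: EC_def ER_def)
    have finC: "finite C" by (rule finite_subset[OF D(1) less.prems(1)])
    have cR: "card R = card V - card C" unfolding R_def by (rule card_Diff_subset[OF finC D(1)])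
    have cCV: "card C \<le> card V" by (rule card_mono[OF less.prems(1) D(1)])
    have cardV: "card V = card C + card R" using cR cCV by linarith
    have Rless: "card R < card V" using cardV D(2) by linarith
    have finR: "finite R" unfolding R_def using less.prems(1) by simp
    have ERwf: "\<forall>e\<in>ER. e \<subseteq> R \<and> card e = 2" unfolding ER_def using less.prems(2) by blast
    have npR: "nopath ER" by (rule nopath_mono[OF less.prems(3)]) (auto simp: ER_def)
    have x1: "card EC \<ge> 1" using D(6) unfolding EC_def .
    have xb: "int (card EC) \<le> Es (card C)" using D(5) unfolding EC_def .
    have pC: "pairs EC = {}" using D(4) unfolding EC_def .
    have IH: "2*int (l + card EC)*int (card ER) + 2*int (card (pairs ER))
      \<le> 2*int (l + card EC)*Es (card R) + G2 (card R)"
      using less.hyps[OF Rless finR ERwf npR, of "l + card EC"] x1 by simp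
    have finEC: "finite EC" "finite ER" using finE unfolding EC_def ER_def by auto
    have ne: "\<forall>a\<in>EC \<union> ER. a \<noteq> {}" using less.prems(2) unfolding EC_def ER_def by fastforce
    have dj: "\<forall>a\<in>EC. \<forall>b\<in>ER. a \<inter> b = {}" unfolding EC_def ER_def R_def by blast
    have pE: "card (pairs E) = card (pairs ER) + card EC * card ER"
      using pairs_split[OF finEC ne dj] pC Esplit by simp
    have ECER: "EC \<inter> ER = {}" using ne dj by blast
    have cE: "card E = card EC + card ER"
      using card_Un_disjoint[OF finEC ECER] Esplit by simp
    define c where "c = card C"
    define r where "r = card R"
    define x where "x = int (card EC)"
    define y where "y = int (card ER)"
    define p where "p = int (card (pairs ER))"
    define L where "L = int l"
    have L0: "L \<ge> 0" and y0: "y \<ge> 0" unfolding L_def y_def by simp_all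
    have IH': "2*(L+x)*y + 2*p \<le> 2*(L+x)*Es r + G2 r"
      using IH unfolding L_def x_def y_def p_def r_def by simp
    have goal: "2*L*(x+y) + 2*(p + x*y) \<le> 2*L*Es (c+r) + G2 (c+r) + (if c+r = 4 \<and> L = 0 then 2 else 0)"
    proof (cases "c = 2 \<and> r = 2")
      case True
      then have "x \<le> 1" using xb unfolding x_def c_def by (simp add: Es_def)
      then have x1': "x = 1" using x1 unfolding x_def by simp
      have e: "Es 2 = 1" "G2 2 = 0" "Es 4 = 3" "G2 4 = 0" by (simp_all add: Es_def G2_def)
      have "2*L*(x+y) + 2*(p + x*y) = 2*L*x + (2*(L+x)*y + 2*p)" by (simp add: algebra_simps)
      also have "\<dots> \<le> 2*L + 2*(L+1)" using IH' True x1' e by simp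
      finally show ?thesis using True e L0 by auto
    next
      case False
      have n1: "Es c + Es r \<le> Es (c+r)" by (rule N1)
      have n2: "G2 c + G2 r + 2*Es c*Es r \<le> G2 (c+r)" using N2 False by blast
      have g0: "G2 c \<ge> 0" by (rule G2_nonneg)
      have er0: "Es r \<ge> 0" by (simp add: Es_def)
      have xb': "x \<le> Es c" using xb unfolding x_def c_def .
      have m1: "L*x \<le> L*Es c" using mult_left_mono[OF xb' L0] .
      have m2: "x*Es r \<le> Es c*Es r" using mult_right_mono[OF xb' er0] .
      have m3: "L*(Es c + Es r) \<le> L*Es (c+r)" using mult_left_mono[OF n1 L0] .
      have "2*L*(x+y) + 2*(p + x*y) = 2*L*x + (2*(L+x)*y + 2*p)" by (simp add: algebra_simps)
      also have "\<dots> \<le> 2*L*x + 2*(L+x)*Es r + G2 r" using IH' by simp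
      also have "\<dots> = 2*(L*x) + 2*(L*Es r) + 2*(x*Es r) + G2 r" by (simp add: algebra_simps)
      also have "\<dots> \<le> 2*(L*Es c) + 2*(L*Es r) + 2*(Es c*Es r) + G2 r" using m1 m2 by simp
      also have "\<dots> = 2*(L*(Es c + Es r)) + (2*Es c*Es r + G2 r)" by (simp add: algebra_simps)
      also have "\<dots> \<le> 2*(L*Es (c+r)) + G2 (c+r)" using m3 n2 g0 by simp
      also have "\<dots> = 2*L*Es (c+r) + G2 (c+r)" by (simp add: mult.assoc)
      finally have fin: "2*L*(x+y) + 2*(p + x*y) \<le> 2*L*Es (c+r) + G2 (c+r)" .
      have ifv: "(if c+r = 4 \<and> L = 0 then 2 else 0) \<ge> (0::int)" by simp
      show ?thesis using fin ifv by linarith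
    qed
    show ?thesis using goal unfolding cE pE cardV L_def x_def y_def p_def c_def r_def
      by (simp add: algebra_simps)
  qed
qed

definition ED :: "nat \<Rightarrow> nat set set" where
  "ED n = {{u,v} | u v. u < n \<and> v < n \<and> u \<noteq> v \<and> u div 3 = v div 3}"

lemma snd_D: "snd (D 3 n) = ED n" unfolding D_def ED_def by simp

definition T3 :: "nat \<Rightarrow> nat set set" where
  "T3 t = {{3*t,3*t+1},{3*t,3*t+2},{3*t+1,3*t+2}}"

lemma div_blk: "3*t \<le> u \<Longrightarrow> u < 3*t+3 \<Longrightarrow> u div 3 = (t::nat)" by presburger
lemma div_lt: "u < 3*t \<Longrightarrow> u div 3 < (t::nat)" by presburger
lemma div_ge: "3*t \<le> u \<Longrightarrow> u div 3 \<ge> (t::nat)" by presburger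

lemma ED_mem: "u < n \<Longrightarrow> v < n \<Longrightarrow> u \<noteq> v \<Longrightarrow> u div 3 = v div 3 \<Longrightarrow> {u,v} \<in> ED n"
  unfolding ED_def by blast

lemma ED_sub: "e \<in> ED n \<Longrightarrow> e \<subseteq> {0..<n}" unfolding ED_def by auto

lemma ED_step3: "ED (3*t+3) = ED (3*t) \<union> T3 t"
proof (intro equalityI subsetI)
  fix e assume "e \<in> ED (3*t+3)"
  then obtain u v where uv: "e = {u,v}" "u < 3*t+3" "v < 3*t+3" "u \<noteq> v" "u div 3 = v div 3"
    unfolding ED_def by blast
  show "e \<in> ED (3*t) \<union> T3 t"
  proof (cases "u < 3*t")
    case True
    then have "v < 3*t" using uv div_lt[OF True] div_ge[of t v] by linarith
    then show ?thesis using True uv unfolding ED_def by blast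
  next
    case False
    then have "\<not> v < 3*t" using uv div_lt[of v t] div_blk[of t u] by linarith
    then have "u \<in> {3*t,3*t+1,3*t+2}" "v \<in> {3*t,3*t+1,3*t+2}" using False uv by auto
    then show ?thesis using uv unfolding T3_def by (auto simp: insert_commute)
  qed
next
  fix e assume "e \<in> ED (3*t) \<union> T3 t"
  then show "e \<in> ED (3*t+3)"
  proof
    assume "e \<in> ED (3*t)" then show ?thesis unfolding ED_def by fastforce
  next
    assume e: "e \<in> T3 t"
    have d: "(3*t) div 3 = t" "(3*t+1) div 3 = t" "(3*t+2) div 3 = t" by presburger+
    have m: "{3*t,3*t+1} \<in> ED (3*t+3)" "{3*t,3*t+2} \<in> ED (3*t+3)" "{3*t+1,3*t+2} \<in> ED (3*t+3)"
      by (rule ED_mem; use d in simp)+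
    show ?thesis using e m unfolding T3_def by blast
  qed
qed

lemma ED_step2: "ED (3*t+2) = ED (3*t) \<union> {{3*t,3*t+1}}"
proof (intro equalityI subsetI)
  fix e assume "e \<in> ED (3*t+2)"
  then obtain u v where uv: "e = {u,v}" "u < 3*t+2" "v < 3*t+2" "u \<noteq> v" "u div 3 = v div 3"
    unfolding ED_def by blast
  show "e \<in> ED (3*t) \<union> {{3*t,3*t+1}}"
  proof (cases "u < 3*t")
    case True
    then have "v < 3*t" using uv div_lt[OF True] div_ge[of t v] by linarith
    then show ?thesis using True uv unfolding ED_def by blast
  next
    case False
    then have "\<not> v < 3*t" using uv div_lt[of v t] div_blk[of t u] by linarith
    then have "u \<in> {3*t,3*t+1}" "v \<in> {3*t,3*t+1}" using False uv by auto
    then show ?thesis using uv by (auto simp: insert_commute)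
  qed
next
  fix e assume "e \<in> ED (3*t) \<union> {{3*t,3*t+1}}"
  then show "e \<in> ED (3*t+2)"
  proof
    assume "e \<in> ED (3*t)" then show ?thesis unfolding ED_def by fastforce
  next
    assume e: "e \<in> {{3*t,3*t+1}}"
    have d: "(3*t) div 3 = t" "(3*t+1) div 3 = t" by presburger+
    have m: "{3*t,3*t+1} \<in> ED (3*t+2)" by (rule ED_mem; use d in simp)
    show ?thesis using e m by blast
  qed
qed

lemma ED_step1: "ED (3*t+1) = ED (3*t)"
proof (intro equalityI subsetI)
  fix e assume "e \<in> ED (3*t+1)"
  then obtain u v where uv: "e = {u,v}" "u < 3*t+1" "v < 3*t+1" "u \<noteq> v" "u div 3 = v div 3"
    unfolding ED_def by blast
  show "e \<in> ED (3*t)"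
  proof (cases "u < 3*t")
    case True
    then have "v < 3*t" using uv div_lt[OF True] div_ge[of t v] by linarith
    then show ?thesis using True uv unfolding ED_def by blast
  next
    case False
    then have "\<not> v < 3*t" using uv div_lt[of v t] div_blk[of t u] by linarith
    then have "u = 3*t" "v = 3*t" using False uv by auto
    then show ?thesis using uv by simp
  qed
next
  fix e assume "e \<in> ED (3*t)"
  then show "e \<in> ED (3*t+1)" unfolding ED_def by fastforce
qed

lemma ED_fin: "finite (ED n)"
  by (rule finite_subset[of _ "Pow {0..<n}"]) (auto dest: ED_sub)

lemma ED_ne: "e \<in> ED n \<Longrightarrow> e \<noteq> {}" unfolding ED_def by auto

lemma T3_props: "card (T3 t) = 3" "pairs (T3 t) = {}" "finite (T3 t)"
  unfolding T3_def pairs_def by (auto simp: doubleton_eq_iff)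

lemma ED_mult3: "int (card (ED (3*t))) = 3*int t \<and> 2*int (card (pairs (ED (3*t)))) = 9*int t*(int t - 1)"
proof (induction t)
  case 0
  have "ED 0 = {}" unfolding ED_def by auto
  then show ?case by (simp add: pairs_def)
next
  case (Suc t)
  have h: "3*Suc t = 3*t+3" by simp
  have e: "ED (3*Suc t) = ED (3*t) \<union> T3 t" unfolding h by (rule ED_step3)
  have ne: "\<forall>a\<in>ED (3*t) \<union> T3 t. a \<noteq> {}" using ED_ne unfolding T3_def by auto
  have dj: "\<forall>a\<in>ED (3*t). \<forall>b\<in>T3 t. a \<inter> b = {}"
  proof (intro ballI)
    fix a b assume a: "a \<in> ED (3*t)" and b: "b \<in> T3 t"
    have "a \<subseteq> {0..<3*t}" using ED_sub[OF a] .
    then have A: "\<forall>z\<in>a. z < 3*t" by auto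
    have B: "\<forall>z\<in>b. 3*t \<le> z" using b unfolding T3_def by auto
    show "a \<inter> b = {}" using A B by (meson disjoint_iff not_le)
  qed
  have dj2: "ED (3*t) \<inter> T3 t = {}" using ne dj by blast
  have c: "card (ED (3*Suc t)) = card (ED (3*t)) + 3"
    unfolding e using card_Un_disjoint[OF ED_fin T3_props(3) dj2] T3_props(1) by simp
  have p: "card (pairs (ED (3*Suc t))) = card (pairs (ED (3*t))) + card (ED (3*t)) * 3"
    unfolding e using pairs_split[OF ED_fin T3_props(3) ne dj] T3_props by simp
  show ?case using Suc.IH c p by (simp add: algebra_simps)
qed

lemma ED_val: "int (card (ED n)) = Es n \<and> 2*int (card (pairs (ED n))) = G2 n"
proof (cases n rule: rep)
  case (1 t)
  then show ?thesis using ED_mult3[of t] Es0[of t] G20[of t] by simp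
next
  case (2 t)
  have "ED n = ED (3*t)" unfolding 2 by (rule ED_step1)
  then show ?thesis using ED_mult3[of t] Es1[of t] G21[of t] 2 by simp
next
  case (3 t)
  have e: "ED n = ED (3*t) \<union> {{3*t,3*t+1}}" unfolding 3 by (rule ED_step2)
  have ne: "\<forall>a\<in>ED (3*t) \<union> {{3*t,3*t+1}}. a \<noteq> {}" using ED_ne by auto
  have dj: "\<forall>a\<in>ED (3*t). \<forall>b\<in>{{3*t,3*t+1}}. a \<inter> b = {}"
  proof (intro ballI)
    fix a b assume a: "a \<in> ED (3*t)" and b: "b \<in> {{3*t,3*t+1}}"
    have "a \<subseteq> {0..<3*t}" by (rule ED_sub[OF a])
    then have A: "\<forall>z\<in>a. z < 3*t" by auto
    have B: "\<forall>z\<in>b. 3*t \<le> z" using b by auto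
    show "a \<inter> b = {}" using A B by (meson disjoint_iff not_le)
  qed
  have nm: "{3*t,3*t+1} \<notin> ED (3*t)"
  proof
    assume "{3*t,3*t+1} \<in> ED (3*t)"
    then have "{3*t,3*t+1} \<subseteq> {0..<3*t}" by (rule ED_sub)
    then show False by simp
  qed
  have dj2: "ED (3*t) \<inter> {{3*t,3*t+1}} = {}" using nm by simp
  have p1: "pairs {{3*t,3*t+1}} = {}" unfolding pairs_def by auto
  have c: "card (ED n) = card (ED (3*t)) + 1"
    unfolding e using card_Un_disjoint[OF ED_fin _ dj2] by simp
  have p: "card (pairs (ED n)) = card (pairs (ED (3*t))) + card (ED (3*t))"
    unfolding e using pairs_split[OF ED_fin _ ne dj] p1 by simp
  show ?thesis using 3 ED_mult3[of t] Es2[of t] G22[of t] c p by (simp add: algebra_simps)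
qed

lemma P4_free_of_nopath:
  assumes g: "is_graph G" and np: "nopath (snd G)"
  shows "H_free P4 G"
  unfolding H_free_def
proof
  assume "\<exists>S. subgraph S G \<and> graph_iso S P4"
  then obtain S where sg: "subgraph S G" and iso: "graph_iso S P4" by blast
  obtain f where bij: "bij_betw f (fst S) {0,1,2,3::nat}"
    and im: "{{0,1},{1,2},{2,3::nat}} = (\<lambda>e. f ` e) ` snd S"
    using iso unfolding graph_iso_def P4_def by auto
  have inj: "inj_on f (fst S)" and surj: "f ` fst S = {0,1,2,3}"
    using bij by (auto simp: bij_betw_def)
  have gS: "is_graph S" using sg unfolding subgraph_def by blast
  have sub: "\<And>e. e \<in> snd S \<Longrightarrow> e \<subseteq> fst S" using gS unfolding is_graph_def by blast
  have H: "{p,q} \<in> snd S" if Hp: "p \<in> fst S" "q \<in> fst S" "{f p, f q} \<in> {{0,1},{1,2},{2,3::nat}}" for p q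
  proof -
    have "{f p, f q} \<in> (\<lambda>e. f ` e) ` snd S" using Hp(3) unfolding im[symmetric] .
    then obtain e where e: "e \<in> snd S" "f ` e = {f p, f q}" by (metis imageE)
    have "f ` e = f ` {p,q}" using e by simp
    moreover have "{p,q} \<subseteq> fst S" using Hp(1,2) by simp
    ultimately have "e = {p,q}" using img_eq_sub[OF inj sub[OF e(1)]] by simp
    then show ?thesis using e by simp
  qed
  have i: "0 \<in> f ` fst S" "1 \<in> f ` fst S" "2 \<in> f ` fst S" "3 \<in> f ` fst S" using surj by auto
  define a where "a = inv_into (fst S) f 0"
  define b where "b = inv_into (fst S) f 1"
  define c where "c = inv_into (fst S) f 2"
  define d where "d = inv_into (fst S) f 3"
  have a: "a \<in> fst S" "f a = 0" unfolding a_def by (rule inv_into_into[OF i(1)], rule f_inv_into_f[OF i(1)])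
  have b: "b \<in> fst S" "f b = 1" unfolding b_def by (rule inv_into_into[OF i(2)], rule f_inv_into_f[OF i(2)])
  have c: "c \<in> fst S" "f c = 2" unfolding c_def by (rule inv_into_into[OF i(3)], rule f_inv_into_f[OF i(3)])
  have d: "d \<in> fst S" "f d = 3" unfolding d_def by (rule inv_into_into[OF i(4)], rule f_inv_into_f[OF i(4)])
  note abcd = a b c d
  have "{a,b} \<in> snd S" "{b,c} \<in> snd S" "{c,d} \<in> snd S" using H abcd by auto
  then have "{a,b} \<in> snd G" "{b,c} \<in> snd G" "{c,d} \<in> snd G" using sg unfolding subgraph_def by auto
  moreover have "distinct [a,b,c,d]" using abcd by auto
  ultimately show False using np unfolding nopath_def by blast
qed

lemma nopath_of_P4_free:
  assumes g: "is_graph G" and hf: "H_free P4 G"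
  shows "nopath (snd G)"
  unfolding nopath_def
proof
  assume "\<exists>a b c d. distinct [a,b,c,d] \<and> {a,b}\<in>snd G \<and> {b,c}\<in>snd G \<and> {c,d}\<in>snd G"
  then obtain a b c d where p: "distinct [a,b,c,d]" "{a,b}\<in>snd G" "{b,c}\<in>snd G" "{c,d}\<in>snd G"
    by blast
  have Vs: "{a,b} \<subseteq> fst G" "{b,c} \<subseteq> fst G" "{c,d} \<subseteq> fst G" using g p unfolding is_graph_def by blast+
  define S where "S = ({a,b,c,d}, {{a,b},{b,c},{c,d}})"
  have "is_graph S" unfolding S_def is_graph_def using p(1) by auto
  then have sg: "subgraph S G" unfolding subgraph_def S_def using Vs p by auto
  define f where "f z = (if z = a then 0 else if z = b then 1 else if z = c then 2 else (3::nat))" for z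
  have fv: "f a = 0" "f b = 1" "f c = 2" "f d = 3" unfolding f_def using p(1) by auto
  have "bij_betw f {a,b,c,d} {0,1,2,3}"
    unfolding bij_betw_def inj_on_def using fv by auto
  moreover have "{{0,1},{1,2},{2,3::nat}} = (\<lambda>e. f ` e) ` {{a,b},{b,c},{c,d}}"
    using fv by simp
  ultimately have "graph_iso S P4" unfolding graph_iso_def P4_def S_def fst_conv snd_conv by blast
  then show False using hf sg unfolding H_free_def by blast
qed

lemma ub:
  assumes g: "is_graph (G :: nat graph)" and V: "fst G = {0..<n}" and hf: "H_free P4 G"
  shows "2*int (count_sub M2 G) \<le> G2 n + (if n = 4 then 2 else 0)"
proof -
  have fin: "finite (fst G)" and wf: "\<forall>e\<in>snd G. e \<subseteq> fst G \<and> card e = 2"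
    using g unfolding is_graph_def by auto
  have "2*int 0*int (card (snd G)) + 2*int (card (pairs (snd G)))
    \<le> 2*int 0*Es (card (fst G)) + G2 (card (fst G)) + (if card (fst G) = 4 \<and> (0::nat) = 0 then 2 else 0)"
    by (rule main_bound[OF fin wf nopath_of_P4_free[OF g hf]])
  then show ?thesis using count_M2[OF g] V by simp
qed

lemma ED_div: "{a,b} \<in> ED n \<Longrightarrow> a div 3 = b div 3"
  unfolding ED_def by (auto simp: doubleton_eq_iff)

lemma blk3: "x div 3 = q \<Longrightarrow> x = 3*q \<or> x = 3*q+1 \<or> x = 3*q+(2::nat)" by presburger

lemma four: "a div 3 = b div 3 \<Longrightarrow> b div 3 = c div 3 \<Longrightarrow> c div 3 = d div 3 \<Longrightarrow> distinct [a,b,c,d::nat] \<Longrightarrow> False"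
proof -
  assume h: "a div 3 = b div 3" "b div 3 = c div 3" "c div 3 = d div 3" "distinct [a,b,c,d::nat]"
  define q where "q = a div 3"
  have "a = 3*q \<or> a = 3*q+1 \<or> a = 3*q+2" by (rule blk3) (simp add: q_def)
  moreover have "b = 3*q \<or> b = 3*q+1 \<or> b = 3*q+2" by (rule blk3) (simp add: q_def h)
  moreover have "c = 3*q \<or> c = 3*q+1 \<or> c = 3*q+2" by (rule blk3) (simp add: q_def h)
  moreover have "d = 3*q \<or> d = 3*q+1 \<or> d = 3*q+2" by (rule blk3) (simp add: q_def h)
  ultimately show False using h(4) by auto
qed

lemma D_props: "is_graph (D 3 n)" "fst (D 3 n) = {0..<n}" "H_free P4 (D 3 n)"
proof -
  show g: "is_graph (D 3 n)" unfolding is_graph_def D_def by auto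
  show "fst (D 3 n) = {0..<n}" unfolding D_def by simp
  have "nopath (ED n)" unfolding nopath_def using ED_div four by blast
  then show "H_free P4 (D 3 n)" using P4_free_of_nopath[OF g] snd_D by simp
qed

lemma D_count: "2*int (count_sub M2 (D 3 n)) = G2 n"
  using count_M2[OF D_props(1)] snd_D ED_val by simp

theorem proposition3p6:
  shows "(\<forall>n::nat. n > 0 \<and> n \<noteq> 4 \<longrightarrow> gen_ex n M2 P4 = count_sub M2 (D 3 n))
         \<and> gen_ex 4 M2 P4 = 1"
proof (intro conjI allI impI)
  fix n :: nat assume n: "n > 0 \<and> n \<noteq> 4"
  let ?A = "{count_sub M2 G | G :: nat graph. is_graph G \<and> fst G = {0..<n} \<and> H_free P4 G}"
  let ?k = "count_sub M2 (D 3 n)"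
  have le: "y \<le> ?k" if yA: "y \<in> ?A" for y
  proof -
    obtain G :: "nat graph" where G: "y = count_sub M2 G" "is_graph G" "fst G = {0..<n}" "H_free P4 G"
      using yA by blast
    have "2*int y \<le> G2 n" using ub[OF G(2,3,4)] n G(1) by simp
    then show ?thesis using D_count[of n] by simp
  qed
  have mem: "?k \<in> ?A" using D_props by blast
  have fin: "finite ?A" by (rule finite_subset[of _ "{..?k}"]) (use le in auto)
  show "gen_ex n M2 P4 = ?k" unfolding gen_ex_def by (rule Max_eqI[OF fin le mem])
next
  let ?A = "{count_sub M2 G | G :: nat graph. is_graph G \<and> fst G = {0..<4} \<and> H_free P4 G}"
  have le: "y \<le> 1" if yA: "y \<in> ?A" for y
  proof -
    obtain G :: "nat graph" where G: "y = count_sub M2 G" "is_graph G" "fst G = {0..<4}" "H_free P4 G"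
      using yA by blast
    have "2*int y \<le> G2 4 + 2" using ub[OF G(2,3,4)] G(1) by simp
    moreover have "G2 4 = 0" by (simp add: G2_def)
    ultimately show ?thesis by simp
  qed
  define K where "K = ({0..<4::nat}, {{0,1},{2,3::nat}})"
  have gK: "is_graph K" unfolding K_def is_graph_def by auto
  have pK: "pairs (snd K) = {{{0,1},{2,3}}}" unfolding K_def pairs_def by (auto simp: doubleton_eq_iff)
  have cK: "count_sub M2 K = 1" using count_M2[OF gK] pK by simp
  have npK: "nopath (snd K)" unfolding K_def nopath_def by (auto simp: doubleton_eq_iff)
  have "H_free P4 K" by (rule P4_free_of_nopath[OF gK npK])
  then have mem: "1 \<in> ?A" using gK cK unfolding K_def by force
  have fin: "finite ?A" by (rule finite_subset[of _ "{..1}"]) (use le in auto)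
  show "gen_ex 4 M2 P4 = 1" unfolding gen_ex_def by (rule Max_eqI[OF fin le mem])
qed

end
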